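(* Let $d\ge 7$ and let $G$ be a $d$-regular graph with girth $g(G)\ge 5$. Then for every vertex $x\in V(G)$ there exists a proper $(d+1)$-coloring $c:V(G)\to[d+1]$ of $G$ in which $x$ and at least four of the neighbors of $x$ are b-vertices, i.e. for each of these five vertices $v$ every color of $[d+1]$ appears on $N[v]$.
   Context: $[k]=\{1,\dots,k\}$. $N[v]$ denotes the closed neighborhood of $v$. The girth $g(G)$ is the length of a shortest cycle in $G$. In a (proper) coloring $c$ with color set $[k]$, a vertex $v$ is a b-vertex if $\{c(u):u\in N[v]\}=[k]$. *)

theory Defs
  imports Main "HOL-Library.Extended_Nat"
begin

definition simple_graph :: "'a set \<Rightarrow> ('a \<Rightarrow> 'a \<Rightarrow> bool) \<Rightarrow> bool" where
  "simple_graph V E \<longleftrightarrow> finite V \<and>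
     (\<forall>u v. E u v \<longrightarrow> u \<in> V \<and> v \<in> V) \<and>
     (\<forall>u v. E u v \<longrightarrow> E v u) \<and> (\<forall>v. \<not> E v v)"

definition neighbors :: "'a set \<Rightarrow> ('a \<Rightarrow> 'a \<Rightarrow> bool) \<Rightarrow> 'a \<Rightarrow> 'a set" where
  "neighbors V E v = {u \<in> V. E v u}"

definition closed_nbhd :: "'a set \<Rightarrow> ('a \<Rightarrow> 'a \<Rightarrow> bool) \<Rightarrow> 'a \<Rightarrow> 'a set" where
  "closed_nbhd V E v = insert v (neighbors V E v)"

definition regular :: "'a set \<Rightarrow> ('a \<Rightarrow> 'a \<Rightarrow> bool) \<Rightarrow> nat \<Rightarrow> bool" where
  "regular V E d \<longleftrightarrow> (\<forall>v\<in>V. card (neighbors V E v) = d)"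

definition is_cycle :: "'a set \<Rightarrow> ('a \<Rightarrow> 'a \<Rightarrow> bool) \<Rightarrow> 'a list \<Rightarrow> bool" where
  "is_cycle V E cs \<longleftrightarrow> length cs \<ge> 3 \<and> distinct cs \<and> set cs \<subseteq> V \<and>
     (\<forall>i < length cs. E (cs ! i) (cs ! ((i + 1) mod length cs)))"

definition girth :: "'a set \<Rightarrow> ('a \<Rightarrow> 'a \<Rightarrow> bool) \<Rightarrow> enat" where
  "girth V E = (INF cs \<in> {cs. is_cycle V E cs}. enat (length cs))"

definition proper_coloring :: "'a set \<Rightarrow> ('a \<Rightarrow> 'a \<Rightarrow> bool) \<Rightarrow> nat \<Rightarrow> ('a \<Rightarrow> nat) \<Rightarrow> bool" where
  "proper_coloring V E k c \<longleftrightarrow> (\<forall>v\<in>V. c v \<in> {1..k}) \<and>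
     (\<forall>u\<in>V. \<forall>v\<in>V. E u v \<longrightarrow> c u \<noteq> c v)"

definition b_vertex :: "'a set \<Rightarrow> ('a \<Rightarrow> 'a \<Rightarrow> bool) \<Rightarrow> nat \<Rightarrow> ('a \<Rightarrow> nat) \<Rightarrow> 'a \<Rightarrow> bool" where
  "b_vertex V E k c v \<longleftrightarrow> c ` closed_nbhd V E v = {1..k}"

end

theory Submission
  imports Defs
begin


lemma swap_bij:
  fixes A :: "'a set" and C :: "'b set" and F :: "'a \<Rightarrow> 'b \<Rightarrow> bool"
  assumes fin: "finite A" and cardAC: "card A = card C" and finC: "finite C"
    and r: "\<And>a. a \<in> A \<Longrightarrow> card {c\<in>C. F a c} \<le> k"
    and s: "\<And>c. c \<in> C \<Longrightarrow> card {a\<in>A. F a c} \<le> k"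
    and n: "2*k \<le> card A"
  shows "\<exists>f. bij_betw f A C \<and> (\<forall>a\<in>A. \<not> F a (f a))"
proof -
  have key: "\<And>g. bij_betw g A C \<Longrightarrow> card {a\<in>A. F a (g a)} = m \<Longrightarrow> \<exists>f. bij_betw f A C \<and> (\<forall>a\<in>A. \<not> F a (f a))" for m
  proof (induction m rule: less_induct)
    case (less m g)
    show ?case
    proof (cases "m = 0")
      case True
      then have "{a\<in>A. F a (g a)} = {}" using less.prems fin by simp
      then show ?thesis using less.prems by blast
    next
      case False
      then obtain a where a: "a \<in> A" "F a (g a)" using less.prems(2)
        by (metis (mono_tags, lifting) Collect_empty_eq card.empty)
      define X where "X = {b\<in>A. F a (g b)}"
      define Y where "Y = {b\<in>A. F b (g a)}"
      have gA: "g ` A = C" "inj_on g A" using less.prems(1) by (auto simp: bij_betw_def)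
      have "g ` X \<subseteq> {c\<in>C. F a c}" using gA by (auto simp: X_def)
      hence "card (g ` X) \<le> card {c\<in>C. F a c}" using finC by (intro card_mono) auto
      moreover have "card (g ` X) = card X" using gA(2) by (intro card_image) (auto simp: X_def intro: inj_on_subset)
      ultimately have cX: "card X \<le> k" using r[OF a(1)] by simp
      have cY: "card Y \<le> k" using s[of "g a"] gA a by (auto simp: Y_def)
      have aXY: "a \<in> X \<inter> Y" using a by (auto simp: X_def Y_def)
      have fXY: "finite X" "finite Y" using fin by (auto simp: X_def Y_def)
      have "card (X \<inter> Y) \<ge> 1" using aXY fXY by (metis One_nat_def Suc_leI card_gt_0_iff empty_iff finite_Int)
      moreover have "card (X \<union> Y) + card (X \<inter> Y) = card X + card Y" using fXY by (rule card_Un_Int[symmetric])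
      ultimately have "card (X \<union> Y) < card A" using cX cY n by linarith
      then obtain b where b: "b \<in> A" "b \<notin> X" "b \<notin> Y"
      proof -
        have "X \<union> Y \<subseteq> A" by (auto simp: X_def Y_def)
        have "A - (X \<union> Y) \<noteq> {}"
        proof
          assume "A - (X \<union> Y) = {}"
          hence "A \<subseteq> X \<union> Y" by blast
          hence "card A \<le> card (X \<union> Y)" using fXY by (intro card_mono) auto
          thus False using \<open>card (X \<union> Y) < card A\<close> by simp
        qed
        thus ?thesis using that by blast
      qed
      have ab: "a \<noteq> b" using a b by (auto simp: X_def)
      define g' where "g' = g(a := g b, b := g a)"
      have "g' ` A = g ` A" using a b ab unfolding g'_def by (auto simp: image_def)
      moreover have "inj_on g' A" using gA(2) a b ab unfolding g'_def inj_on_def by auto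
      ultimately have bij': "bij_betw g' A C" using gA by (simp add: bij_betw_def)
      have sub: "{c\<in>A. F c (g' c)} \<subseteq> {c\<in>A. F c (g c)} - {a}"
        using a b ab unfolding g'_def X_def Y_def by auto
      have "card {c\<in>A. F c (g' c)} < m"
      proof -
        have "card {c\<in>A. F c (g' c)} \<le> card ({c\<in>A. F c (g c)} - {a})" using sub fin by (intro card_mono) auto
        also have "\<dots> < m" using less.prems(2) a fin False by (simp add: card_Diff1_less)
        finally show ?thesis .
      qed
      then show ?thesis using less.IH bij' by blast
    qed
  qed
  obtain g where "bij_betw g A C" using finite_same_card_bij[OF fin finC cardAC] by blast
  then show ?thesis using key by blast
qed


lemma build_col:
  fixes Z :: "nat \<Rightarrow> 'a set" and C :: "nat \<Rightarrow> nat set"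
  assumes sym: "\<And>u v. E u v \<Longrightarrow> E v u" and irr: "\<And>v. \<not> E v v"
    and fin: "\<And>i. i < m \<Longrightarrow> finite (Z i)"
    and finC: "\<And>i. i < m \<Longrightarrow> finite (C i)"
    and cd: "\<And>i. i < m \<Longrightarrow> card (Z i) = card (C i)"
    and big: "\<And>i. i < m \<Longrightarrow> 2 * i \<le> card (Z i)"
    and disj: "\<And>i j. i < m \<Longrightarrow> j < m \<Longrightarrow> i \<noteq> j \<Longrightarrow> Z i \<inter> Z j = {}"
    and one: "\<And>i j z. i < m \<Longrightarrow> j < m \<Longrightarrow> i \<noteq> j \<Longrightarrow> z \<in> Z i \<Longrightarrow> card {w\<in>Z j. E z w} \<le> 1"
  shows "\<exists>g. (\<forall>i<m. bij_betw g (Z i) (C i)) \<and> (\<forall>i<m. \<forall>j<m. \<forall>z\<in>Z i. \<forall>w\<in>Z j. E z w \<longrightarrow> g z \<noteq> g w)"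
  using fin finC cd big disj one
proof (induction m)
  case 0
  then show ?case by auto
next
  case (Suc m)
  obtain g where g: "\<forall>i<m. bij_betw g (Z i) (C i)" "\<forall>i<m. \<forall>j<m. \<forall>z\<in>Z i. \<forall>w\<in>Z j. E z w \<longrightarrow> g z \<noteq> g w"
  proof -
    have "\<exists>g. (\<forall>i<m. bij_betw g (Z i) (C i)) \<and> (\<forall>i<m. \<forall>j<m. \<forall>z\<in>Z i. \<forall>w\<in>Z j. E z w \<longrightarrow> g z \<noteq> g w)"
    proof (rule Suc.IH)
      fix i j z assume "i < m" "j < m" "i \<noteq> j" "z \<in> Z i"
      then show "card {w\<in>Z j. E z w} \<le> 1" using Suc.prems(6)[of i j z] by simp
    next
      fix i j assume "i < m" "j < m" "i \<noteq> j"
      then show "Z i \<inter> Z j = {}" using Suc.prems(5)[of i j] by simp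
    qed (use Suc.prems(1-4) in simp_all)
    thus ?thesis using that by blast
  qed
  define W where "W = (\<Union>i<m. Z i)"
  have finW: "finite W" using Suc.prems(1) by (auto simp: W_def)
  define F where "F z c = (\<exists>w\<in>W. E z w \<and> g w = c)" for z c
  have r: "card {c\<in>C m. F z c} \<le> m" if z: "z \<in> Z m" for z
  proof -
    have "{c\<in>C m. F z c} \<subseteq> g ` {w\<in>W. E z w}" by (auto simp: F_def)
    hence "card {c\<in>C m. F z c} \<le> card (g ` {w\<in>W. E z w})" using finW by (intro card_mono) auto
    also have "\<dots> \<le> card {w\<in>W. E z w}" using finW by (intro card_image_le) auto
    also have "{w\<in>W. E z w} = (\<Union>i<m. {w\<in>Z i. E z w})" by (auto simp: W_def)
    also have "card \<dots> \<le> (\<Sum>i<m. card {w\<in>Z i. E z w})" by (rule card_UN_le) auto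
    also have "\<dots> \<le> of_nat (card {..<m}) * 1"
      using Suc.prems(6)[of m _ z] z by (intro sum_bounded_above) auto
    finally show ?thesis by simp
  qed
  have s: "card {z\<in>Z m. F z c} \<le> m" for c
  proof -
    have "{z\<in>Z m. F z c} \<subseteq> (\<Union>w\<in>{w\<in>W. g w = c}. {z\<in>Z m. E w z})" using sym by (auto simp: F_def)
    hence "card {z\<in>Z m. F z c} \<le> card (\<Union>w\<in>{w\<in>W. g w = c}. {z\<in>Z m. E w z})"
      using Suc.prems(1)[of m] by (intro card_mono) (simp_all, rule finite_subset[of _ "Z m"], auto)
    also have "\<dots> \<le> (\<Sum>w\<in>{w\<in>W. g w = c}. card {z\<in>Z m. E w z})" using finW by (intro card_UN_le) auto
    also have "\<dots> \<le> of_nat (card {w\<in>W. g w = c}) * 1"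
    proof (intro sum_bounded_above)
      fix w assume "w \<in> {w\<in>W. g w = c}"
      then obtain i where "i < m" "w \<in> Z i" by (auto simp: W_def)
      then show "card {z\<in>Z m. E w z} \<le> 1" using Suc.prems(6)[of i m w] by auto
    qed
    also have "{w\<in>W. g w = c} = (\<Union>i<m. {w\<in>Z i. g w = c})" by (auto simp: W_def)
    also have "card \<dots> \<le> (\<Sum>i<m. card {w\<in>Z i. g w = c})" by (rule card_UN_le) auto
    also have "\<dots> \<le> of_nat (card {..<m}) * 1"
    proof (intro sum_bounded_above)
      fix i assume i: "i \<in> {..<m}"
      have "inj_on g (Z i)" using g(1) i by (auto simp: bij_betw_def)
      hence "\<forall>a1\<in>{w\<in>Z i. g w = c}. \<forall>a2\<in>{w\<in>Z i. g w = c}. a1 = a2" by (auto simp: inj_on_def)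
      then show "card {w\<in>Z i. g w = c} \<le> 1" using Suc.prems(1) i
        by (subst One_nat_def, subst card_le_Suc0_iff_eq) auto
    qed
    finally show ?thesis by simp
  qed
  obtain f where f: "bij_betw f (Z m) (C m)" "\<forall>z\<in>Z m. \<not> F z (f z)"
  proof -
    have zz: "finite (Z m)" "card (Z m) = card (C m)" "finite (C m)" "2*m \<le> card (Z m)"
      using Suc.prems(1-4)[of m] by auto
    show ?thesis using swap_bij[OF zz(1) zz(2) zz(3) r s zz(4)] that by blast
  qed
  define g' where "g' v = (if v \<in> Z m then f v else g v)" for v
  have b1: "bij_betw g' (Z i) (C i)" if "i < Suc m" for i
  proof (cases "i = m")
    case True
    have "\<forall>v\<in>Z m. g' v = f v" by (simp add: g'_def)
    then show ?thesis using f(1) True bij_betw_cong[of "Z m" g' f "C m"] by simp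
  next
    case False
    hence im: "i < m" using that by simp
    have "\<forall>v\<in>Z i. g' v = g v" using Suc.prems(5)[of i m] im by (auto simp: g'_def)
    then show ?thesis using g(1) im bij_betw_cong[of "Z i" g' g "C i"] by simp
  qed
  have b2: "g' z \<noteq> g' w" if ij: "i < Suc m" "j < Suc m" and zw: "z \<in> Z i" "w \<in> Z j" "E z w" for i j z w
  proof -
    have gm: "g' v = g v" if "k < m" "v \<in> Z k" for v k
    proof -
      have "v \<notin> Z m" using Suc.prems(5)[of k m] that by auto
      thus ?thesis by (simp add: g'_def)
    qed
    show ?thesis
    proof (cases "i = m")
      case True
      show ?thesis
      proof (cases "j = m")
        case True
        have "z \<noteq> w" using irr zw by auto
        then show ?thesis using f(1) zw \<open>i = m\<close> True by (auto simp: g'_def bij_betw_def inj_on_def)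
      next
        case False
        hence "j < m" using ij by simp
        hence "w \<in> W" using zw by (auto simp: W_def)
        moreover have "g' z = f z" using zw \<open>i = m\<close> by (simp add: g'_def)
        moreover have "f z \<noteq> g w" using f(2) zw(1,3) \<open>w \<in> W\<close> unfolding \<open>i = m\<close> F_def by (metis (no_types))
        ultimately show ?thesis using gm[OF \<open>j < m\<close> zw(2)] by simp
      qed
    next
      case False
      hence im: "i < m" using ij by simp
      show ?thesis
      proof (cases "j = m")
        case True
        hence "z \<in> W" using zw im by (auto simp: W_def)
        moreover have "g' w = f w" using zw True by (simp add: g'_def)
        moreover have "f w \<noteq> g z" using f(2) zw(2) \<open>z \<in> W\<close> sym[OF zw(3)] unfolding True F_def by (metis (no_types))
        ultimately show ?thesis using gm[OF im zw(1)] by simp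
      next
        case False
        hence "j < m" using ij by simp
        then show ?thesis using g(2) im zw gm[OF im zw(1)] gm[OF \<open>j < m\<close> zw(2)] by simp
      qed
    qed
  qed
  show ?case using b1 b2 by blast
qed




lemma girth_cycle_len:
  assumes "girth V E \<ge> 5" "is_cycle V E cs"
  shows "length cs \<ge> 5"
proof -
  have "girth V E \<le> enat (length cs)"
    unfolding girth_def using assms(2) by (intro INF_lower) simp
  hence "(5::enat) \<le> enat (length cs)" using assms(1) by (rule order_trans[rotated])
  thus ?thesis by (simp add: numeral_eq_enat)
qed

lemma no_tri:
  assumes g: "simple_graph V E" and gi: "girth V E \<ge> 5"
    and e: "E a b" "E b c" "E c a"
  shows False
proof -
  have "a \<noteq> b" "b \<noteq> c" "c \<noteq> a" using g e unfolding simple_graph_def by blast+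
  moreover have "a \<in> V" "b \<in> V" "c \<in> V" using g e unfolding simple_graph_def by blast+
  ultimately have "is_cycle V E [a,b,c]" using e
    unfolding is_cycle_def
  proof (intro conjI allI impI)
    fix i assume "i < length [a,b,c]"
    hence "i = 0 \<or> i = 1 \<or> i = 2" by auto
    thus "E ([a,b,c] ! i) ([a,b,c] ! ((i+1) mod length [a,b,c]))" using e by auto
  qed auto
  then show False using girth_cycle_len[OF gi] by fastforce
qed

lemma no_sq:
  assumes g: "simple_graph V E" and gi: "girth V E \<ge> 5"
    and e: "E a b" "E b c" "E c d" "E d a" and ne: "a \<noteq> c" "b \<noteq> d"
  shows False
proof -
  have "a \<noteq> b" "b \<noteq> c" "c \<noteq> d" "d \<noteq> a" using g e unfolding simple_graph_def by blast+
  moreover have "a \<in> V" "b \<in> V" "c \<in> V" "d \<in> V" using g e unfolding simple_graph_def by blast+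
  ultimately have "is_cycle V E [a,b,c,d]" using e ne
    unfolding is_cycle_def
  proof (intro conjI allI impI)
    fix i assume "i < length [a,b,c,d]"
    hence "i = 0 \<or> i = 1 \<or> i = 2 \<or> i = 3" by auto
    thus "E ([a,b,c,d] ! i) ([a,b,c,d] ! ((i+1) mod length [a,b,c,d]))" using e by auto
  qed auto
  then show False using girth_cycle_len[OF gi] by fastforce
qed



lemma greedy_ext:
  assumes g: "simple_graph V E" and deg: "\<And>v. v \<in> V \<Longrightarrow> card (neighbors V E v) \<le> d"
    and B: "B \<subseteq> V" and pc: "\<And>v. v \<in> B \<Longrightarrow> p v \<in> {1..d+1}"
    and pp: "\<And>u v. u \<in> B \<Longrightarrow> v \<in> B \<Longrightarrow> E u v \<Longrightarrow> p u \<noteq> p v"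
  shows "\<exists>c. proper_coloring V E (d+1) c \<and> (\<forall>v\<in>B. c v = p v)"
  using B pc pp
proof (induction "card (V - B)" arbitrary: B p)
  case 0
  have "finite V" using g by (simp add: simple_graph_def)
  hence "B = V" using 0 by auto
  then show ?case using 0 by (auto simp: proper_coloring_def)
next
  case (Suc n B p)
  have finV: "finite V" using g by (simp add: simple_graph_def)
  have "V - B \<noteq> {}" using Suc.hyps(2) by (cases "V - B = {}") auto
  then obtain v where v: "v \<in> V" "v \<notin> B" by blast
  define U where "U = p ` (neighbors V E v \<inter> B)"
  have finNv: "finite (neighbors V E v)" using finV by (simp add: neighbors_def)
  have "card U \<le> card (neighbors V E v \<inter> B)" unfolding U_def using finNv by (intro card_image_le) auto
  also have "\<dots> \<le> card (neighbors V E v)" using finNv by (intro card_mono) auto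
  also have "\<dots> \<le> d" using deg v by simp
  finally have cU: "card U \<le> d" .
  have "{1..d+1} - U \<noteq> {}"
  proof
    assume "{1..d+1} - U = {}"
    hence "{1..d+1} \<subseteq> U" by blast
    hence "card {1..d+1} \<le> card U" using finNv by (intro card_mono) (auto simp: U_def)
    thus False using cU by simp
  qed
  then obtain col where col: "col \<in> {1..d+1}" "col \<notin> U" by blast
  define p' where "p' = p(v := col)"
  have "V - insert v B = (V - B) - {v}" by auto
  hence n: "n = card (V - insert v B)" using Suc.hyps(2) v finV by (simp add: card_Diff_singleton)
  have "\<exists>c. proper_coloring V E (d+1) c \<and> (\<forall>w\<in>insert v B. c w = p' w)"
  proof (rule Suc.hyps(1)[OF n])
    show "insert v B \<subseteq> V" using Suc.prems(1) v by auto
    show "\<And>w. w \<in> insert v B \<Longrightarrow> p' w \<in> {1..d+1}" using Suc.prems(2) col by (auto simp: p'_def)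
    show "\<And>u w. u \<in> insert v B \<Longrightarrow> w \<in> insert v B \<Longrightarrow> E u w \<Longrightarrow> p' u \<noteq> p' w"
    proof -
      fix u w assume u: "u \<in> insert v B" and w: "w \<in> insert v B" and e: "E u w"
      have sy: "E w u" using g e by (simp add: simple_graph_def)
      have irr: "u \<noteq> w" using g e by (auto simp: simple_graph_def)
      show "p' u \<noteq> p' w"
      proof (cases "u = v")
        case True
        hence "w \<in> B" "w \<noteq> v" using w irr by auto
        hence "p w \<in> U" using e True g unfolding U_def neighbors_def simple_graph_def by blast
        then show ?thesis using True col \<open>w \<noteq> v\<close> by (auto simp: p'_def)
      next
        case False
        hence uB: "u \<in> B" using u by auto
        show ?thesis
        proof (cases "w = v")
          case True
          hence "p u \<in> U" using sy uB g unfolding U_def neighbors_def simple_graph_def by blast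
          then show ?thesis using True col False by (auto simp: p'_def)
        next
          case False
          hence "w \<in> B" using w by auto
          then show ?thesis using Suc.prems(3)[OF uB _ e] \<open>u \<noteq> v\<close> False by (auto simp: p'_def)
        qed
      qed
    qed
  qed
  then show ?case using v by (auto simp: p'_def)
qed



theorem mainTheorem2:
  fixes V :: "'a set" and E :: "'a \<Rightarrow> 'a \<Rightarrow> bool" and d :: nat and x :: 'a
  assumes "simple_graph V E"
    and "d \<ge> 7"
    and "regular V E d"
    and "girth V E \<ge> 5"
    and "x \<in> V"
  shows "\<exists>c :: 'a \<Rightarrow> nat. proper_coloring V E (d + 1) c \<and> b_vertex V E (d + 1) c x \<and>
           (\<exists>S \<subseteq> neighbors V E x. card S \<ge> 4 \<and> (\<forall>v\<in>S. b_vertex V E (d + 1) c v))"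
proof -
  note sg = assms(1) and gi = assms(4)
  have finV: "finite V" and memV: "\<And>u v. E u v \<Longrightarrow> u \<in> V \<and> v \<in> V"
    and sym: "\<And>u v. E u v \<Longrightarrow> E v u" and irr: "\<And>v. \<not> E v v"
    using sg by (auto simp: simple_graph_def)
  define N where "N = neighbors V E"
  have Nx: "\<And>u v. u \<in> N v \<longleftrightarrow> u \<in> V \<and> E v u" by (simp add: N_def neighbors_def)
  have finN: "\<And>v. finite (N v)" using finV by (simp add: N_def neighbors_def)
  have cardN: "\<And>v. v \<in> V \<Longrightarrow> card (N v) = d" using assms(3) by (simp add: N_def regular_def)
  obtain S where S: "S \<subseteq> N x" "card S = 4" "finite S"
    using obtain_subset_with_card_n[of 4 "N x"] cardN[OF assms(5)] assms(2) by auto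
  obtain y where y: "bij_betw y {0..<4::nat} S" using ex_bij_betw_nat_finite[OF S(3)] S(2) by auto
  have yN: "\<And>i. i < 4 \<Longrightarrow> y i \<in> N x" using y S(1) by (auto simp: bij_betw_def)
  have yinj: "\<And>i j. i < 4 \<Longrightarrow> j < 4 \<Longrightarrow> i \<noteq> j \<Longrightarrow> y i \<noteq> y j"
    using y by (auto simp: bij_betw_def inj_on_def)
  have yS: "S = y ` {0..<4}" using y by (auto simp: bij_betw_def)
  have yE: "\<And>i. i < 4 \<Longrightarrow> E x (y i) \<and> y i \<in> V" using yN Nx by auto
  obtain h where h: "bij_betw h (N x) {1..d}"
    using finite_same_card_bij[OF finN[of x], of "{1..d}"] cardN[OF assms(5)] by auto
  have hN: "\<And>v. v \<in> N x \<Longrightarrow> h v \<in> {1..d}" using h by (auto simp: bij_betw_def)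
  have hy: "\<And>i. i < 4 \<Longrightarrow> h (y i) \<in> {1..d}" using hN yN by auto
  define Z where "Z i = N (y i) - {x}" for i
  define C where "C i = {1..d} - {h (y i)}" for i
  have xNy: "\<And>i. i<4 \<Longrightarrow> x \<in> N (y i)" using yE sym assms(5) Nx by auto
  have NyZ: "\<And>i. i<4 \<Longrightarrow> N (y i) = insert x (Z i)" using xNy by (auto simp: Z_def)
  have cZ: "card (Z i) = d - 1" if "i < 4" for i
    using xNy[OF that] cardN yE[OF that] finN by (simp add: Z_def card_Diff_singleton)
  have cC: "card (C i) = d - 1" if "i < 4" for i using hy[OF that] by (simp add: C_def card_Diff_singleton)
  have ZE: "\<And>i z. z \<in> Z i \<longleftrightarrow> z \<in> V \<and> E (y i) z \<and> z \<noteq> x" by (auto simp: Z_def Nx)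
  have Znot: "z \<notin> N x \<and> z \<noteq> x" if iz: "i < 4" "z \<in> Z i" for i z
  proof
    show "z \<notin> N x"
    proof
      assume "z \<in> N x"
      then show False using no_tri[OF sg gi, of x "y i" z] yE[OF iz(1)] iz ZE Nx sym by blast
    qed
  qed (use ZE iz in auto)
  have disj: "Z i \<inter> Z j = {}" if ij: "i<4" "j<4" "i\<noteq>j" for i j
  proof (rule ccontr)
    assume "Z i \<inter> Z j \<noteq> {}"
    then obtain z where z: "z \<in> Z i" "z \<in> Z j" by blast
    have "E x (y i)" "E (y i) z" "E z (y j)" "E (y j) x" using yE ij z ZE sym by blast+
    moreover have "x \<noteq> z" "y i \<noteq> y j" using z ZE yinj ij by auto
    ultimately show False using no_sq[OF sg gi] by blast
  qed
  have one: "card {w\<in>Z j. E z w} \<le> 1" if ij: "i<4" "j<4" "i\<noteq>j" and z: "z \<in> Z i" for i j z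
  proof -
    have fin: "finite {w\<in>Z j. E z w}" using finN by (simp add: Z_def)
    have "\<forall>a1\<in>{w\<in>Z j. E z w}. \<forall>a2\<in>{w\<in>Z j. E z w}. a1 = a2"
    proof (intro ballI, rule ccontr)
      fix a1 a2 assume a1: "a1 \<in> {w\<in>Z j. E z w}" and a2: "a2 \<in> {w\<in>Z j. E z w}" and ne: "a1 \<noteq> a2"
      have "E z a1" "E a1 (y j)" "E (y j) a2" "E a2 z" using a1 a2 ZE sym by auto
      moreover have "z \<noteq> y j" using Znot[OF ij(1) z] yN[OF ij(2)] by auto
      ultimately show False using no_sq[OF sg gi] ne by blast
    qed
    then show ?thesis using fin by (subst One_nat_def, subst card_le_Suc0_iff_eq) auto
  qed
  obtain gc where gc: "\<forall>i<4. bij_betw gc (Z i) (C i)"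
    "\<forall>i<4. \<forall>j<4. \<forall>z\<in>Z i. \<forall>w\<in>Z j. E z w \<longrightarrow> gc z \<noteq> gc w"
  proof -
    have "\<exists>g. (\<forall>i<4. bij_betw g (Z i) (C i)) \<and> (\<forall>i<4. \<forall>j<4. \<forall>z\<in>Z i. \<forall>w\<in>Z j. E z w \<longrightarrow> g z \<noteq> g w)"
    proof (rule build_col[of E])
      show "\<And>u v. E u v \<Longrightarrow> E v u" by (rule sym)
      show "\<And>v. \<not> E v v" by (rule irr)
      show "\<And>i. i < 4 \<Longrightarrow> finite (Z i)" using finN by (simp add: Z_def)
      show "\<And>i. i < 4 \<Longrightarrow> finite (C i)" by (simp add: C_def)
      show "\<And>i. i < 4 \<Longrightarrow> card (Z i) = card (C i)" using cZ cC by simp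
      show "\<And>i. i < 4 \<Longrightarrow> 2 * i \<le> card (Z i)" using cZ assms(2) by simp
      show "\<And>i j. i < 4 \<Longrightarrow> j < 4 \<Longrightarrow> i \<noteq> j \<Longrightarrow> Z i \<inter> Z j = {}" by (rule disj)
      show "\<And>i j z. i < 4 \<Longrightarrow> j < 4 \<Longrightarrow> i \<noteq> j \<Longrightarrow> z \<in> Z i \<Longrightarrow> card {w\<in>Z j. E z w} \<le> 1" by (rule one)
    qed
    then show ?thesis using that by blast
  qed
  have gcC: "\<And>i v. i<4 \<Longrightarrow> v \<in> Z i \<Longrightarrow> gc v \<in> C i" using gc(1) by (auto simp: bij_betw_def)
  have gcZ: "\<And>i. i<4 \<Longrightarrow> gc ` Z i = C i" using gc(1) by (auto simp: bij_betw_def)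
  define B where "B = insert x (N x \<union> (\<Union>i<4. Z i))"
  define p where "p v = (if v = x then d+1 else if v \<in> N x then h v else gc v)" for v
  have pZ: "\<And>i v. i<4 \<Longrightarrow> v \<in> Z i \<Longrightarrow> p v = gc v" using Znot by (simp add: p_def)
  have pN: "\<And>v. v \<in> N x \<Longrightarrow> p v = h v" using Nx irr by (auto simp: p_def)
  have px: "p x = d + 1" by (simp add: p_def)
  have c3: "p u \<noteq> p v" if "u \<in> N x" "i < 4" "v \<in> Z i" "E u v" for u v i
  proof (cases "u = y i")
    case True
    then show ?thesis using pN[OF that(1)] pZ[OF that(2,3)] gcC[OF that(2,3)] by (simp add: C_def)
  next
    case False
    have "E x u" "E u v" "E v (y i)" "E (y i) x" using that Nx ZE sym yE by blast+
    moreover have "x \<noteq> v" using Znot that by blast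
    ultimately show ?thesis using no_sq[OF sg gi] False by blast
  qed
  have c2: "\<not> E u v" if "u \<in> N x" "v \<in> N x" for u v
    using no_tri[OF sg gi, of x u v] that Nx sym by blast
  have c1: "p x \<noteq> p v" if "v \<in> N x" for v using pN[OF that] hN[OF that] px by auto
  have pp: "p u \<noteq> p v" if u: "u \<in> B" and v: "v \<in> B" and e: "E u v" for u v
  proof -
    have uc: "u = x \<or> u \<in> N x \<or> (\<exists>i<4. u \<in> Z i)" using u by (auto simp: B_def)
    have vc: "v = x \<or> v \<in> N x \<or> (\<exists>i<4. v \<in> Z i)" using v by (auto simp: B_def)
    have ev: "E v u" using sym e by blast
    show ?thesis
    proof (cases "u = x")
      case True
      hence "v \<in> N x" using e memV Nx by blast
      then show ?thesis using c1 True by simp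
    next
      case ux: False
      show ?thesis
      proof (cases "v = x")
        case True
        hence "u \<in> N x" using ev memV Nx by blast
        then show ?thesis using c1 True by metis
      next
        case vx: False
        show ?thesis
        proof (cases "u \<in> N x")
          case uN: True
          show ?thesis
          proof (cases "v \<in> N x")
            case True then show ?thesis using c2 uN e by blast
          next
            case False
            then obtain i where "i < 4" "v \<in> Z i" using vc vx by blast
            then show ?thesis using c3 uN e by blast
          qed
        next
          case uN: False
          then obtain i where i: "i < 4" "u \<in> Z i" using uc ux by blast
          show ?thesis
          proof (cases "v \<in> N x")
            case True then show ?thesis using c3[OF True i ev] by metis
          next
            case False
            then obtain j where j: "j < 4" "v \<in> Z j" using vc vx by blast
            then show ?thesis using gc(2) i e pZ by metis
          qed
        qed
      qed
    qed
  qed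
  have BV: "B \<subseteq> V" using assms(5) Nx ZE by (auto simp: B_def)
  have pc: "p v \<in> {1..d+1}" if "v \<in> B" for v
  proof -
    have "v = x \<or> v \<in> N x \<or> (\<exists>i<4. v \<in> Z i)" using that by (auto simp: B_def)
    then show ?thesis using px pN hN pZ gcC by (auto simp: C_def) (metis le_SucI)+
  qed
  have deg: "\<And>v. v \<in> V \<Longrightarrow> card (neighbors V E v) \<le> d" using assms(3) by (simp add: regular_def)
  obtain c where c: "proper_coloring V E (d+1) c" "\<forall>v\<in>B. c v = p v"
  proof -
    have "\<exists>c. proper_coloring V E (d+1) c \<and> (\<forall>v\<in>B. c v = p v)"
      by (rule greedy_ext[OF sg deg BV]) (use pc pp in auto)
    then show ?thesis using that by blast
  qed
  have "x \<in> B" unfolding B_def by blast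
  hence cx: "c x = d + 1" using c(2) px by simp
  have bx: "b_vertex V E (d+1) c x"
  proof -
    have cl: "closed_nbhd V E x = insert x (N x)" by (simp add: closed_nbhd_def N_def)
    have "\<forall>v\<in>N x. c v = h v"
    proof
      fix v assume v: "v \<in> N x"
      hence "v \<in> B" unfolding B_def by blast
      thus "c v = h v" using c(2) pN[OF v] by simp
    qed
    hence "c ` N x = h ` N x" by (metis image_cong)
    also have "\<dots> = {1..d}" using h by (simp add: bij_betw_def)
    finally have "c ` closed_nbhd V E x = insert (d+1) {1..d}" unfolding cl using cx by simp
    also have "\<dots> = {1..d+1}" using atLeastAtMostSuc_conv[of 1 d] by simp
    finally show ?thesis by (simp add: b_vertex_def)
  qed
  have byi: "b_vertex V E (d+1) c (y i)" if i: "i < 4" for i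
  proof -
    have cl: "closed_nbhd V E (y i) = insert (y i) (insert x (Z i))" using NyZ[OF i] by (simp add: closed_nbhd_def N_def)
    have "\<forall>v\<in>Z i. c v = gc v"
    proof
      fix v assume v: "v \<in> Z i"
      hence "v \<in> B" using i unfolding B_def by blast
      thus "c v = gc v" using c(2) pZ[OF i v] by simp
    qed
    hence "c ` Z i = gc ` Z i" by (metis image_cong)
    moreover have "c (y i) = h (y i)"
    proof -
      have "y i \<in> B" using yN[OF i] unfolding B_def by blast
      thus ?thesis using c(2) pN[OF yN[OF i]] by simp
    qed
    moreover note cx
    ultimately have "c ` closed_nbhd V E (y i) = insert (h (y i)) (insert (d+1) (C i))"
      unfolding cl using gcZ[OF i] by simp
    also have "\<dots> = {1..d+1}" using hy[OF i] by (auto simp: C_def)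
    finally show ?thesis by (simp add: b_vertex_def)
  qed
  have "S \<subseteq> neighbors V E x" using S(1) by (simp add: N_def)
  moreover have "\<forall>v\<in>S. b_vertex V E (d + 1) c v" using yS byi by auto
  ultimately show ?thesis using c(1) bx S(2) by (intro exI[of _ c]) (auto intro!: exI[of _ S])
qed

end
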